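(* Let $\Gamma$ be a grid and let $r_1\leq r_2$. For each $i\in\{1,2\}$ let $Z_i$ be the $(r_i\times r_i)$-grid and suppose that $Z_i$ is a minor of $\Gamma$ with minor mapping $\mu_i$. Assume that $\mu_1(V(Z_1))\cap\mu_2(V(Z_2))=\emptyset$. For each $i\in\{1,2\}$ let $Y_i$ be the set of vertices in the first row of $Z_i$, for each $v\in Y_i$ pick some $q(v)\in\mu_i(v)$, and let $W_i=\{q(v): v\in Y_i\}$. Then $W_1\cup W_2$ is $1/384$-cut-linked in $\Gamma$.
   Context: The $(r\times\ell)$-grid is the Cartesian product $P_r\times P_\ell$ of paths; a grid is such a graph. If $H$ is a minor of $G$ (obtained by edge contractions, edge deletions and vertex deletions), the minor mapping $\mu:V(H)\to 2^{V(G)}$ sends each vertex of $H$ to the set of vertices of $G$ contracted into it; for $Z\subseteq V(H)$, $\mu(Z)=\bigcup_{v\in Z}\mu(v)$. A set $X\subseteq V(G)$ is $\alpha$-cut-linked in $G$ if for every partition of $V(G)$ into $\{A,B\}$ we have $|E(A,B)|\geq\alpha\cdot\min\{|A\cap X|,|B\cap X|\}$. *)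

theory Defs
  imports Complex_Main
begin

text \<open>Graphs are given by a vertex set V and a symmetric irreflexive adjacency relation E.\<close>

text \<open>The (r x l)-grid P_r x P_l: vertices (i,j) with i < r (row index), j < l (column index);
  two vertices are adjacent iff they differ by one in exactly one coordinate.\<close>
definition grid_V :: "nat \<Rightarrow> nat \<Rightarrow> (nat \<times> nat) set" where
  "grid_V r l = {0..<r} \<times> {0..<l}"

definition grid_adj :: "nat \<times> nat \<Rightarrow> nat \<times> nat \<Rightarrow> bool" where
  "grid_adj u v \<longleftrightarrow>
     (fst u = fst v \<and> (snd u = Suc (snd v) \<or> snd v = Suc (snd u))) \<or>
     (snd u = snd v \<and> (fst u = Suc (fst v) \<or> fst v = Suc (fst u)))"

definition grid_first_row :: "nat \<Rightarrow> (nat \<times> nat) set" where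
  "grid_first_row l = {(0, j) | j. j < l}"

definition induces_connected :: "'a set \<Rightarrow> ('a \<Rightarrow> 'a \<Rightarrow> bool) \<Rightarrow> 'a set \<Rightarrow> bool" where
  "induces_connected V E S \<longleftrightarrow> S \<noteq> {} \<and> S \<subseteq> V \<and>
     (\<forall>x\<in>S. \<forall>y\<in>S. (\<lambda>a b. a \<in> S \<and> b \<in> S \<and> E a b)\<^sup>*\<^sup>* x y)"

definition minor_map ::
  "'b set \<Rightarrow> ('b \<Rightarrow> 'b \<Rightarrow> bool) \<Rightarrow> 'a set \<Rightarrow> ('a \<Rightarrow> 'a \<Rightarrow> bool) \<Rightarrow> ('b \<Rightarrow> 'a set) \<Rightarrow> bool" where
  "minor_map VH EH VG EG \<mu> \<longleftrightarrow>
     (\<forall>v\<in>VH. induces_connected VG EG (\<mu> v)) \<and>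
     (\<forall>u\<in>VH. \<forall>v\<in>VH. u \<noteq> v \<longrightarrow> \<mu> u \<inter> \<mu> v = {}) \<and>
     (\<forall>u\<in>VH. \<forall>v\<in>VH. EH u v \<longrightarrow> (\<exists>x\<in>\<mu> u. \<exists>y\<in>\<mu> v. EG x y))"

definition cut_edges :: "('a \<Rightarrow> 'a \<Rightarrow> bool) \<Rightarrow> 'a set \<Rightarrow> 'a set \<Rightarrow> nat" where
  "cut_edges E A B = card {(a, b). a \<in> A \<and> b \<in> B \<and> E a b}"

definition cut_linked :: "'a set \<Rightarrow> ('a \<Rightarrow> 'a \<Rightarrow> bool) \<Rightarrow> real \<Rightarrow> 'a set \<Rightarrow> bool" where
  "cut_linked V E \<alpha> X \<longleftrightarrow> X \<subseteq> V \<and>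
     (\<forall>A B. A \<union> B = V \<and> A \<inter> B = {} \<longrightarrow>
        real (cut_edges E A B) \<ge> \<alpha> * real (min (card (A \<inter> X)) (card (B \<inter> X))))"

end

theory Submission imports Defs begin

lemma grid_adj_sym: "grid_adj u v \<Longrightarrow> grid_adj v u"
  unfolding grid_adj_def by auto

lemma grid_adj_irrefl: "\<not> grid_adj u u"
  unfolding grid_adj_def by auto

lemma finite_grid_V[simp]: "finite (grid_V r l)"
  unfolding grid_V_def by auto

lemma mem_grid_V[simp]: "(a,b) \<in> grid_V r l \<longleftrightarrow> a < r \<and> b < l"
  unfolding grid_V_def by auto

lemma mm_conn: "minor_map VH EH VG EG \<mu> \<Longrightarrow> v \<in> VH \<Longrightarrow> induces_connected VG EG (\<mu> v)"
  unfolding minor_map_def by blast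
lemma mm_disj: "minor_map VH EH VG EG \<mu> \<Longrightarrow> u \<in> VH \<Longrightarrow> v \<in> VH \<Longrightarrow> u \<noteq> v \<Longrightarrow> \<mu> u \<inter> \<mu> v = {}"
  unfolding minor_map_def by blast
lemma ic_ne: "induces_connected V E S \<Longrightarrow> S \<noteq> {}"
  unfolding induces_connected_def by blast
lemma ic_sub: "induces_connected V E S \<Longrightarrow> S \<subseteq> V"
  unfolding induces_connected_def by blast

lemma split_edge:
  assumes ic: "induces_connected V E S" and SA: "x \<in> S \<inter> A" and SB: "y \<in> S \<inter> B"
    and AB: "A \<inter> B = {}" and V: "V \<subseteq> A \<union> B"
  shows "\<exists>a\<in>S \<inter> A. \<exists>b\<in>S \<inter> B. E a b"
proof -
  have S: "S \<subseteq> A \<union> B" using ic V unfolding induces_connected_def by auto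
  have path: "(\<lambda>a b. a \<in> S \<and> b \<in> S \<and> E a b)\<^sup>*\<^sup>* x y"
    using ic SA SB unfolding induces_connected_def by auto
  have "z \<in> A \<or> (\<exists>a\<in>S \<inter> A. \<exists>b\<in>S \<inter> B. E a b)"
    if "(\<lambda>a b. a \<in> S \<and> b \<in> S \<and> E a b)\<^sup>*\<^sup>* x z" for z
    using that
  proof (induction rule: rtranclp_induct)
    case base
    then show ?case using SA by auto
  next
    case (step y' z')
    then show ?case using S by blast
  qed
  from this[OF path] SB AB show ?thesis by blast
qed

lemma card_Plus_le:
  assumes "finite X" "finite Y" "inj_on h (X <+> Y)" "h ` (X <+> Y) \<subseteq> C" "finite C"
  shows "card (X <+> Y) \<le> card C"
  using card_inj_on_le assms by blast

lemma F1:
  fixes \<mu> :: "nat \<times> nat \<Rightarrow> (nat \<times> nat) set"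
  assumes AB: "A \<union> B = grid_V r l" "A \<inter> B = {}"
    and mm: "minor_map (grid_V g h) grid_adj (grid_V r l) grid_adj \<mu>"
    and cg: "cut_edges grid_adj A B < g" and ch: "cut_edges grid_adj A B < h"
  shows "\<exists>S. (S = A \<or> S = B) \<and> (\<exists>G H. G \<subseteq> {..<g} \<and> H \<subseteq> {..<h} \<and>
      g \<le> card G + cut_edges grid_adj A B \<and> h \<le> card H + cut_edges grid_adj A B \<and>
      (\<forall>i\<in>G. \<forall>j<h. \<mu> (i,j) \<subseteq> S) \<and> (\<forall>j\<in>H. \<forall>i<g. \<mu> (i,j) \<subseteq> S))"
proof -
  define V where "V = grid_V r l"
  define ZV where "ZV = grid_V g h"
  define c where "c = cut_edges grid_adj A B"
  define C where "C = {(a, b). a \<in> A \<and> b \<in> B \<and> grid_adj a b}"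
  have cC: "c = card C" unfolding c_def C_def cut_edges_def by simp
  have finC: "finite C"
    by (rule finite_subset[of _ "V \<times> V"]) (use AB in \<open>auto simp: C_def V_def\<close>)
  have conn: "induces_connected V grid_adj (\<mu> v)" if "v \<in> ZV" for v
    using mm that unfolding minor_map_def V_def ZV_def by auto
  have ne: "\<mu> v \<noteq> {}" and sub: "\<mu> v \<subseteq> A \<union> B" if "v \<in> ZV" for v
    using conn[OF that] AB unfolding induces_connected_def V_def by auto
  have disj: "\<mu> u \<inter> \<mu> v = {}" if "u \<in> ZV" "v \<in> ZV" "u \<noteq> v" for u v
    using mm that unfolding minor_map_def ZV_def by auto
  have eadj: "\<exists>x\<in>\<mu> u. \<exists>y\<in>\<mu> v. grid_adj x y" if "u \<in> ZV" "v \<in> ZV" "grid_adj u v" for u v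
    using mm that unfolding minor_map_def ZV_def by auto
  define sp where "sp v \<longleftrightarrow> \<mu> v \<inter> A \<noteq> {} \<and> \<mu> v \<inter> B \<noteq> {}" for v
  define pA where "pA v \<longleftrightarrow> \<mu> v \<subseteq> A" for v
  have nonsplit: "pA v \<or> \<mu> v \<subseteq> B" if "v \<in> ZV" "\<not> sp v" for v
    using sub[OF that(1)] that(2) unfolding sp_def pA_def by blast
  have notboth: "\<not> (pA v \<and> \<mu> v \<subseteq> B)" if "v \<in> ZV" for v
    using ne[OF that] AB unfolding pA_def by blast
  define DV where "DV = {v \<in> ZV. sp v}"
  define DE where "DE = {(u,v). u \<in> ZV \<and> v \<in> ZV \<and> grid_adj u v \<and> pA u \<and> \<mu> v \<subseteq> B}"
  define D where "D = DV <+> DE"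
  have finZV: "finite ZV" unfolding ZV_def by simp
  have finD: "finite D" unfolding D_def DV_def DE_def
    by (rule finite_Plus) (auto intro: finite_subset[of _ "ZV \<times> ZV"] simp: finZV)
  have "\<forall>v\<in>DV. \<exists>e. e \<in> C \<and> fst e \<in> \<mu> v \<and> snd e \<in> \<mu> v"
  proof
    fix v assume v: "v \<in> DV"
    then have vZ: "v \<in> ZV" and "sp v" unfolding DV_def by auto
    then obtain x y where "x \<in> \<mu> v \<inter> A" "y \<in> \<mu> v \<inter> B" unfolding sp_def by blast
    from split_edge[OF conn[OF vZ] this AB(2)] AB(1)
    obtain a b where "a \<in> \<mu> v \<inter> A" "b \<in> \<mu> v \<inter> B" "grid_adj a b"
      unfolding V_def by blast
    then show "\<exists>e. e \<in> C \<and> fst e \<in> \<mu> v \<and> snd e \<in> \<mu> v"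
      by (intro exI[of _ "(a,b)"]) (auto simp: C_def)
  qed
  then obtain f1 where f1: "\<forall>v\<in>DV. f1 v \<in> C \<and> fst (f1 v) \<in> \<mu> v \<and> snd (f1 v) \<in> \<mu> v"
    by metis
  have "\<forall>e\<in>DE. \<exists>p. p \<in> C \<and> fst p \<in> \<mu> (fst e) \<and> snd p \<in> \<mu> (snd e)"
  proof
    fix e assume e: "e \<in> DE"
    then obtain u v where uv: "e = (u,v)" "u \<in> ZV" "v \<in> ZV" "grid_adj u v" "pA u" "\<mu> v \<subseteq> B"
      unfolding DE_def by auto
    then obtain x y where "x \<in> \<mu> u" "y \<in> \<mu> v" "grid_adj x y" using eadj by blast
    then show "\<exists>p. p \<in> C \<and> fst p \<in> \<mu> (fst e) \<and> snd p \<in> \<mu> (snd e)"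
      using uv by (intro exI[of _ "(x,y)"]) (auto simp: C_def pA_def)
  qed
  then obtain f2 where f2: "\<forall>e\<in>DE. f2 e \<in> C \<and> fst (f2 e) \<in> \<mu> (fst e) \<and> snd (f2 e) \<in> \<mu> (snd e)"
    by metis
  define hh where "hh = case_sum f1 f2"
  have DVZ: "DV \<subseteq> ZV" unfolding DV_def by auto
  have DEZ: "fst e \<in> ZV \<and> snd e \<in> ZV \<and> fst e \<noteq> snd e" if "e \<in> DE" for e
    using that grid_adj_irrefl unfolding DE_def by auto
  have inj: "inj_on hh D"
  proof (rule inj_onI)
    fix d1 d2 assume d1: "d1 \<in> D" and d2: "d2 \<in> D" and eq: "hh d1 = hh d2"
    show "d1 = d2"
    proof (cases d1)
      case (Inl v1)
      with d1 have v1: "v1 \<in> DV" unfolding D_def by auto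
      show ?thesis
      proof (cases d2)
        case (Inl v2)
        with d2 have v2: "v2 \<in> DV" unfolding D_def by auto
        have "fst (f1 v1) \<in> \<mu> v1 \<inter> \<mu> v2" using f1 v1 v2 eq Inl \<open>d1 = Inl v1\<close>
          by (auto simp: hh_def)
        then have "v1 = v2" using disj DVZ v1 v2 by blast
        then show ?thesis using Inl \<open>d1 = Inl v1\<close> by simp
      next
        case (Inr e2)
        with d2 have e2: "e2 \<in> DE" unfolding D_def by auto
        have "fst (f1 v1) \<in> \<mu> v1 \<inter> \<mu> (fst e2)" "snd (f1 v1) \<in> \<mu> v1 \<inter> \<mu> (snd e2)"
          using f1 f2 v1 e2 eq Inr \<open>d1 = Inl v1\<close> by (auto simp: hh_def)
        then have "v1 = fst e2" "v1 = snd e2" using disj DVZ DEZ[OF e2] v1 by blast+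
        then show ?thesis using DEZ[OF e2] by simp
      qed
    next
      case (Inr e1)
      with d1 have e1: "e1 \<in> DE" unfolding D_def by auto
      show ?thesis
      proof (cases d2)
        case (Inl v2)
        with d2 have v2: "v2 \<in> DV" unfolding D_def by auto
        have "fst (f1 v2) \<in> \<mu> v2 \<inter> \<mu> (fst e1)" "snd (f1 v2) \<in> \<mu> v2 \<inter> \<mu> (snd e1)"
          using f1 f2 v2 e1 eq Inl \<open>d1 = Inr e1\<close> by (auto simp: hh_def)
        then have "v2 = fst e1" "v2 = snd e1" using disj DVZ DEZ[OF e1] v2 by blast+
        then show ?thesis using DEZ[OF e1] by simp
      next
        case (Inr e2)
        with d2 have e2: "e2 \<in> DE" unfolding D_def by auto
        have "fst (f2 e1) \<in> \<mu> (fst e1) \<inter> \<mu> (fst e2)" "snd (f2 e1) \<in> \<mu> (snd e1) \<inter> \<mu> (snd e2)"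
          using f2 e1 e2 eq Inr \<open>d1 = Inr e1\<close> by (auto simp: hh_def)
        then have "fst e1 = fst e2" "snd e1 = snd e2" using disj DEZ[OF e1] DEZ[OF e2] by blast+
        then show ?thesis using Inr \<open>d1 = Inr e1\<close> by (simp add: prod_eq_iff)
      qed
    qed
  qed
  have img: "hh ` D \<subseteq> C" using f1 f2 unfolding hh_def D_def by auto
  have cardD: "card D \<le> c" unfolding cC using card_inj_on_le[OF inj img finC] .
  define goodrow where "goodrow i \<longleftrightarrow> (\<forall>j<h. \<not> sp (i,j)) \<and>
     (\<forall>j. Suc j < h \<longrightarrow> ((i,j),(i,Suc j)) \<notin> DE \<and> ((i,Suc j),(i,j)) \<notin> DE)" for i
  define goodcol where "goodcol j \<longleftrightarrow> (\<forall>i<g. \<not> sp (i,j)) \<and>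
     (\<forall>i. Suc i < g \<longrightarrow> ((i,j),(Suc i,j)) \<notin> DE \<and> ((Suc i,j),(i,j)) \<notin> DE)" for j
  define rowof where "rowof d = (case d of Inl v \<Rightarrow> fst v | Inr e \<Rightarrow> fst (fst e))" for d :: "(nat\<times>nat) + ((nat\<times>nat)\<times>(nat\<times>nat))"
  define colof where "colof d = (case d of Inl v \<Rightarrow> snd v | Inr e \<Rightarrow> snd (fst e))" for d :: "(nat\<times>nat) + ((nat\<times>nat)\<times>(nat\<times>nat))"
  define G where "G = {i \<in> {..<g}. goodrow i}"
  define H where "H = {j \<in> {..<h}. goodcol j}"
  have badR: "{i \<in> {..<g}. \<not> goodrow i} \<subseteq> rowof ` D"
  proof
    fix i assume "i \<in> {i \<in> {..<g}. \<not> goodrow i}"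
    then have i: "i < g" "\<not> goodrow i" by auto
    then consider j where "j < h" "sp (i,j)"
      | j where "Suc j < h" "((i,j),(i,Suc j)) \<in> DE"
      | j where "Suc j < h" "((i,Suc j),(i,j)) \<in> DE"
      unfolding goodrow_def by blast
    then show "i \<in> rowof ` D"
    proof cases
      case 1
      then have "Inl (i,j) \<in> D" using i unfolding D_def DV_def ZV_def by auto
      then show ?thesis by (force simp: rowof_def)
    next
      case 2
      then have "Inr ((i,j),(i,Suc j)) \<in> D" unfolding D_def by auto
      then show ?thesis by (force simp: rowof_def)
    next
      case 3
      then have "Inr ((i,Suc j),(i,j)) \<in> D" unfolding D_def by auto
      then show ?thesis by (force simp: rowof_def)
    qed
  qed
  have badC: "{j \<in> {..<h}. \<not> goodcol j} \<subseteq> colof ` D"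
  proof
    fix j assume "j \<in> {j \<in> {..<h}. \<not> goodcol j}"
    then have j: "j < h" "\<not> goodcol j" by auto
    then consider i where "i < g" "sp (i,j)"
      | i where "Suc i < g" "((i,j),(Suc i,j)) \<in> DE"
      | i where "Suc i < g" "((Suc i,j),(i,j)) \<in> DE"
      unfolding goodcol_def by blast
    then show "j \<in> colof ` D"
    proof cases
      case 1
      then have "Inl (i,j) \<in> D" using j unfolding D_def DV_def ZV_def by auto
      then show ?thesis by (force simp: colof_def)
    next
      case 2
      then have "Inr ((i,j),(Suc i,j)) \<in> D" unfolding D_def by auto
      then show ?thesis by (force simp: colof_def)
    next
      case 3
      then have "Inr ((Suc i,j),(i,j)) \<in> D" unfolding D_def by auto
      then show ?thesis by (force simp: colof_def)
    qed
  qed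
  have cR: "card {i \<in> {..<g}. \<not> goodrow i} \<le> c"
    using card_mono[OF finite_imageI[OF finD] badR] card_image_le[OF finD, of rowof] cardD by linarith
  have cCo: "card {j \<in> {..<h}. \<not> goodcol j} \<le> c"
    using card_mono[OF finite_imageI[OF finD] badC] card_image_le[OF finD, of colof] cardD by linarith
  have "card G + card {i \<in> {..<g}. \<not> goodrow i} = card (G \<union> {i \<in> {..<g}. \<not> goodrow i})"
    by (rule card_Un_disjoint[symmetric]) (auto simp: G_def)
  also have "G \<union> {i \<in> {..<g}. \<not> goodrow i} = {..<g}" unfolding G_def by auto
  finally have "card G + card {i \<in> {..<g}. \<not> goodrow i} = card {..<g}" .
  then have cG: "g \<le> card G + c" using cR by simp
  have "card H + card {j \<in> {..<h}. \<not> goodcol j} = card (H \<union> {j \<in> {..<h}. \<not> goodcol j})"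
    by (rule card_Un_disjoint[symmetric]) (auto simp: H_def)
  also have "H \<union> {j \<in> {..<h}. \<not> goodcol j} = {..<h}" unfolding H_def by auto
  finally have "card H + card {j \<in> {..<h}. \<not> goodcol j} = card {..<h}" .
  then have cH: "h \<le> card H + c" using cCo by simp
  have rowmono: "pA (i,j) \<longleftrightarrow> pA (i,0)" if "i \<in> G" "j < h" for i j
    using that(2)
  proof (induction j)
    case 0 then show ?case by simp
  next
    case (Suc j)
    have i: "i < g" "goodrow i" using that(1) unfolding G_def by auto
    have Z1: "(i,j) \<in> ZV" "(i,Suc j) \<in> ZV" using i Suc.prems unfolding ZV_def by auto
    have ns: "\<not> sp (i,j)" "\<not> sp (i,Suc j)" using i Suc.prems unfolding goodrow_def by auto
    have nd: "((i,j),(i,Suc j)) \<notin> DE" "((i,Suc j),(i,j)) \<notin> DE" using i Suc.prems unfolding goodrow_def by auto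
    have adj: "grid_adj (i,j) (i,Suc j)" "grid_adj (i,Suc j) (i,j)" unfolding grid_adj_def by auto
    have "pA (i,Suc j) \<longleftrightarrow> pA (i,j)"
      using nonsplit[OF Z1(1) ns(1)] nonsplit[OF Z1(2) ns(2)] notboth[OF Z1(1)] notboth[OF Z1(2)]
        nd adj Z1 unfolding DE_def by auto
    then show ?case using Suc by simp
  qed
  have colmono: "pA (i,j) \<longleftrightarrow> pA (0,j)" if "j \<in> H" "i < g" for i j
    using that(2)
  proof (induction i)
    case 0 then show ?case by simp
  next
    case (Suc i)
    have j: "j < h" "goodcol j" using that(1) unfolding H_def by auto
    have Z1: "(i,j) \<in> ZV" "(Suc i,j) \<in> ZV" using j Suc.prems unfolding ZV_def by auto
    have ns: "\<not> sp (i,j)" "\<not> sp (Suc i,j)" using j Suc.prems unfolding goodcol_def by auto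
    have nd: "((i,j),(Suc i,j)) \<notin> DE" "((Suc i,j),(i,j)) \<notin> DE" using j Suc.prems unfolding goodcol_def by auto
    have adj: "grid_adj (i,j) (Suc i,j)" "grid_adj (Suc i,j) (i,j)" unfolding grid_adj_def by auto
    have "pA (Suc i,j) \<longleftrightarrow> pA (i,j)"
      using nonsplit[OF Z1(1) ns(1)] nonsplit[OF Z1(2) ns(2)] notboth[OF Z1(1)] notboth[OF Z1(2)]
        nd adj Z1 unfolding DE_def by auto
    then show ?case using Suc by simp
  qed
  have "G \<noteq> {}" using cG cg unfolding c_def by auto
  then obtain i0 where i0: "i0 \<in> G" by blast
  have "H \<noteq> {}" using cH ch unfolding c_def by auto
  then obtain j0 where j0: "j0 \<in> H" by blast
  have i0g: "i0 < g" using i0 unfolding G_def by auto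
  have j0h: "j0 < h" using j0 unfolding H_def by auto
  define S where "S = (if pA (i0,j0) then A else B)"
  have key: "\<mu> (i,j) \<subseteq> S" if "i < g" "j < h" "pA (i,j) \<longleftrightarrow> pA (i0,j0)" "\<not> sp (i,j)" for i j
  proof -
    have "(i,j) \<in> ZV" using that unfolding ZV_def by auto
    from nonsplit[OF this that(4)] that(3) show ?thesis unfolding S_def pA_def by auto
  qed
  have rows: "\<forall>i\<in>G. \<forall>j<h. \<mu> (i,j) \<subseteq> S"
  proof (intro ballI allI impI)
    fix i j assume i: "i \<in> G" and j: "j < h"
    have "pA (i,j) \<longleftrightarrow> pA (i0,j0)"
      using rowmono[OF i j] rowmono[OF i j0h] colmono[OF j0, of i] colmono[OF j0 i0g] i unfolding G_def by auto
    moreover have "\<not> sp (i,j)" using i j unfolding G_def goodrow_def by auto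
    ultimately show "\<mu> (i,j) \<subseteq> S" using key i j unfolding G_def by auto
  qed
  have cols: "\<forall>j\<in>H. \<forall>i<g. \<mu> (i,j) \<subseteq> S"
  proof (intro ballI allI impI)
    fix i j assume j: "j \<in> H" and i: "i < g"
    have "pA (i,j) \<longleftrightarrow> pA (i0,j0)"
      using colmono[OF j i] colmono[OF j i0g] rowmono[OF i0 j0h] rowmono[OF i0, of j] j unfolding H_def by auto
    moreover have "\<not> sp (i,j)" using i j unfolding H_def goodcol_def by auto
    ultimately show "\<mu> (i,j) \<subseteq> S" using key i j unfolding H_def by auto
  qed
  have "G \<subseteq> {..<g}" "H \<subseteq> {..<h}" unfolding G_def H_def by auto
  then have "\<exists>G H. G \<subseteq> {..<g} \<and> H \<subseteq> {..<h} \<and>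
      g \<le> card G + cut_edges grid_adj A B \<and> h \<le> card H + cut_edges grid_adj A B \<and>
      (\<forall>i\<in>G. \<forall>j<h. \<mu> (i,j) \<subseteq> S) \<and> (\<forall>j\<in>H. \<forall>i<g. \<mu> (i,j) \<subseteq> S)"
    using rows cols cG cH unfolding c_def by (intro exI[of _ G] exI[of _ H] conjI) simp_all
  moreover have "S = A \<or> S = B" unfolding S_def by auto
  ultimately show ?thesis by (intro exI[of _ S] conjI)
qed

lemma F1obt:
  fixes \<mu> :: "nat \<times> nat \<Rightarrow> (nat \<times> nat) set"
  assumes AB: "A \<union> B = grid_V r l" "A \<inter> B = {}"
    and mm: "minor_map (grid_V g h) grid_adj (grid_V r l) grid_adj \<mu>"
    and cg: "cut_edges grid_adj A B < g" and ch: "cut_edges grid_adj A B < h"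
  obtains S G H where "S = A \<or> S = B" "G \<subseteq> {..<g}" "H \<subseteq> {..<h}"
      "g \<le> card G + cut_edges grid_adj A B" "h \<le> card H + cut_edges grid_adj A B"
      "\<forall>i\<in>G. \<forall>j<h. \<mu> (i,j) \<subseteq> S" "\<forall>j\<in>H. \<forall>i<g. \<mu> (i,j) \<subseteq> S"
  using F1[OF assms] by (elim exE conjE) (rule that; assumption)

lemma ivt_nat: "\<not> P 0 \<Longrightarrow> P n \<Longrightarrow> \<exists>x<n. \<not> P x \<and> P (Suc x)"
proof (induction n)
  case 0 then show ?case by simp
next
  case (Suc n)
  then show ?case by (cases "P n") (auto intro: less_SucI)
qed

lemma strip_col:
  fixes \<mu> :: "nat \<times> nat \<Rightarrow> (nat \<times> nat) set"
  assumes mm: "minor_map (grid_V g g) grid_adj (grid_V r l) grid_adj \<mu>"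
    and q: "\<forall>j<g. q (0,j) \<in> \<mu> (0,j)"
  shows "g \<le> 3 * r"
proof (rule ccontr)
  assume "\<not> g \<le> 3 * r"
  then have g3: "3 * r < g" by simp
  define V where "V = grid_V r l"
  define A where "A x = {v \<in> V. snd v < x}" for x
  define B where "B x = {v \<in> V. x \<le> snd v}" for x
  have sub: "\<mu> (0,j) \<subseteq> V" "\<mu> (0,j) \<noteq> {}" if "j < g" for j
  proof -
    have "(0,j) \<in> grid_V g g" using that by simp
    then have "induces_connected V grid_adj (\<mu> (0,j))" unfolding V_def by (rule mm_conn[OF mm])
    then show "\<mu> (0,j) \<subseteq> V" "\<mu> (0,j) \<noteq> {}" by (rule ic_sub, rule ic_ne)
  qed
  have disj: "\<mu> (0,j) \<inter> \<mu> (0,j') = {}" if "j < g" "j' < g" "j \<noteq> j'" for j j'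
  proof -
    have "(0,j) \<in> grid_V g g" "(0,j') \<in> grid_V g g" "(0,j) \<noteq> (0,j')" using that by simp_all
    then show ?thesis by (rule mm_disj[OF mm])
  qed
  have qinj: "inj_on (\<lambda>j. q (0,j)) {..<g}"
    using q disj by (intro inj_onI) (metis IntI empty_iff lessThan_iff)
  have cut: "cut_edges grid_adj (A x) (B x) \<le> r" for x
  proof -
    have "{(a, b). a \<in> A x \<and> b \<in> B x \<and> grid_adj a b} \<subseteq> (\<lambda>i. ((i, x - 1), (i, x))) ` {..<r}"
    proof clarify
      fix a1 a2 b1 b2 assume as: "(a1,a2) \<in> A x" "(b1,b2) \<in> B x" and adj: "grid_adj (a1,a2) (b1,b2)"
      have h: "a1 < r" "a2 < x" "x \<le> b2" using as by (simp_all add: A_def B_def V_def)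
      have "a1 = b1 \<and> b2 = Suc a2" using h(2,3) adj unfolding grid_adj_def by auto
      then show "((a1,a2),(b1,b2)) \<in> (\<lambda>i. ((i, x - 1), (i, x))) ` {..<r}"
        using h by (intro image_eqI[of _ _ a1]) auto
    qed
    then have "card {(a, b). a \<in> A x \<and> b \<in> B x \<and> grid_adj a b} \<le> card ((\<lambda>i. ((i, x - 1), (i, x))) ` {..<r})"
      by (rule card_mono[rotated]) simp
    also have "\<dots> \<le> r" using card_image_le[of "{..<r}"] by simp
    finally show ?thesis unfolding cut_edges_def .
  qed
  define P where "P x \<longleftrightarrow> (\<exists>H \<subseteq> {..<g}. g \<le> card H + r \<and> (\<forall>j\<in>H. snd (q (0,j)) < x))" for x
  define Q where "Q x \<longleftrightarrow> (\<exists>H \<subseteq> {..<g}. g \<le> card H + r \<and> (\<forall>j\<in>H. x \<le> snd (q (0,j))))" for x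
  have PQ: "P x \<or> Q x" for x
  proof -
    have AB: "A x \<union> B x = grid_V r l" "A x \<inter> B x = {}" unfolding A_def B_def V_def by auto
    have c: "cut_edges grid_adj (A x) (B x) < g" using cut[of x] g3 by linarith
    obtain S G H where S: "S = A x \<or> S = B x" and H: "H \<subseteq> {..<g}"
      "g \<le> card H + cut_edges grid_adj (A x) (B x)" "\<forall>j\<in>H. \<forall>i<g. \<mu> (i,j) \<subseteq> S"
      by (rule F1obt[OF AB mm c c])
    have Hc: "g \<le> card H + r" using H(2) cut[of x] by linarith
    have g0: "0 < g" using g3 by simp
    have qS: "q (0,j) \<in> S" if "j \<in> H" for j 
    proof -
      have "j < g" using H(1) that by auto
      then have "q (0,j) \<in> \<mu> (0,j)" "\<mu> (0,j) \<subseteq> S" using q H(3) that g0 by auto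
      then show ?thesis by blast
    qed
    from S show ?thesis
    proof
      assume "S = A x" then have "P x" unfolding P_def using H(1) Hc qS by (auto simp: A_def)
      then show ?thesis ..
    next
      assume "S = B x" then have "Q x" unfolding Q_def using H(1) Hc qS by (auto simp: B_def)
      then show ?thesis ..
    qed
  qed
  have nP0: "\<not> P 0" unfolding P_def using g3 by auto
  have nQl: "\<not> Q l"
  proof
    assume "Q l"
    then obtain H where H: "H \<subseteq> {..<g}" "g \<le> card H + r" "\<forall>j\<in>H. l \<le> snd (q (0,j))"
      unfolding Q_def by blast
    have "H \<noteq> {}" using H(2) g3 by auto
    then obtain j where j: "j \<in> H" by blast
    then have "j < g" using H(1) by auto
    then have "q (0,j) \<in> V" using q sub(1) by blast
    then show False using H(3) j unfolding V_def by (cases "q (0,j)") auto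
  qed
  have "P l" using PQ nQl by blast
  from ivt_nat[of P, OF nP0 this] obtain x where x: "\<not> P x" "P (Suc x)" by blast
  then have "Q x" using PQ by blast
  then obtain H1 where H1: "H1 \<subseteq> {..<g}" "g \<le> card H1 + r" "\<forall>j\<in>H1. x \<le> snd (q (0,j))"
    unfolding Q_def by blast
  obtain H2 where H2: "H2 \<subseteq> {..<g}" "g \<le> card H2 + r" "\<forall>j\<in>H2. snd (q (0,j)) < Suc x"
    using x unfolding P_def by blast
  have "(\<lambda>j. q (0,j)) ` (H1 \<inter> H2) \<subseteq> ({..<r} \<times> {x})"
  proof
    fix v assume "v \<in> (\<lambda>j. q (0,j)) ` (H1 \<inter> H2)"
    then obtain j where j: "j \<in> H1" "j \<in> H2" "v = q (0,j)" by blast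
    then have "j < g" using H1 by auto
    then have "v \<in> V" using q sub(1) j by blast
    moreover have "snd v = x" using H1(3) H2(3) j by fastforce
    ultimately show "v \<in> ({..<r} \<times> {x})" unfolding V_def by (cases v) auto
  qed
  then have "card ((\<lambda>j. q (0,j)) ` (H1 \<inter> H2)) \<le> card (({..<r} \<times> {x}))"
    by (rule card_mono[rotated]) simp
  moreover have "card ((\<lambda>j. q (0,j)) ` (H1 \<inter> H2)) = card (H1 \<inter> H2)"
    by (rule card_image) (rule inj_on_subset[OF qinj], use H1 in auto)
  moreover have "card (({..<r} \<times> {x})) = r" by (simp add: card_cartesian_product)
  ultimately have I: "card (H1 \<inter> H2) \<le> r" by simp
  have "card (H1 \<union> H2) \<le> card {..<g}" using H1(1) H2(1) by (intro card_mono) auto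
  then have "card (H1 \<union> H2) \<le> g" by simp
  moreover have "card (H1 \<union> H2) + card (H1 \<inter> H2) = card H1 + card H2"
    using card_Un_Int[OF finite_subset[OF H1(1)] finite_subset[OF H2(1)]] by simp
  ultimately show False using H1(2) H2(2) I g3 by linarith
qed



lemma strip_row:
  fixes \<mu> :: "nat \<times> nat \<Rightarrow> (nat \<times> nat) set"
  assumes mm: "minor_map (grid_V g g) grid_adj (grid_V r l) grid_adj \<mu>"
    and q: "\<forall>j<g. q (0,j) \<in> \<mu> (0,j)"
  shows "g \<le> 3 * l"
proof (rule ccontr)
  assume "\<not> g \<le> 3 * l"
  then have g3: "3 * l < g" by simp
  define V where "V = grid_V r l"
  define A where "A x = {v \<in> V. fst v < x}" for x
  define B where "B x = {v \<in> V. x \<le> fst v}" for x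
  have sub: "\<mu> (0,j) \<subseteq> V" "\<mu> (0,j) \<noteq> {}" if "j < g" for j
  proof -
    have "(0,j) \<in> grid_V g g" using that by simp
    then have "induces_connected V grid_adj (\<mu> (0,j))" unfolding V_def by (rule mm_conn[OF mm])
    then show "\<mu> (0,j) \<subseteq> V" "\<mu> (0,j) \<noteq> {}" by (rule ic_sub, rule ic_ne)
  qed
  have disj: "\<mu> (0,j) \<inter> \<mu> (0,j') = {}" if "j < g" "j' < g" "j \<noteq> j'" for j j'
  proof -
    have "(0,j) \<in> grid_V g g" "(0,j') \<in> grid_V g g" "(0,j) \<noteq> (0,j')" using that by simp_all
    then show ?thesis by (rule mm_disj[OF mm])
  qed
  have qinj: "inj_on (\<lambda>j. q (0,j)) {..<g}"
    using q disj by (intro inj_onI) (metis IntI empty_iff lessThan_iff)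
  have cut: "cut_edges grid_adj (A x) (B x) \<le> l" for x
  proof -
    have "{(a, b). a \<in> A x \<and> b \<in> B x \<and> grid_adj a b} \<subseteq> (\<lambda>i. ((x - 1, i), (x, i))) ` {..<l}"
    proof clarify
      fix a1 a2 b1 b2 assume as: "(a1,a2) \<in> A x" "(b1,b2) \<in> B x" and adj: "grid_adj (a1,a2) (b1,b2)"
      have h: "a2 < l" "a1 < x" "x \<le> b1" using as by (simp_all add: A_def B_def V_def)
      have "a2 = b2 \<and> b1 = Suc a1" using h(2,3) adj unfolding grid_adj_def by auto
      then show "((a1,a2),(b1,b2)) \<in> (\<lambda>i. ((x - 1, i), (x, i))) ` {..<l}"
        using h by (intro image_eqI[of _ _ a2]) auto
    qed
    then have "card {(a, b). a \<in> A x \<and> b \<in> B x \<and> grid_adj a b} \<le> card ((\<lambda>i. ((x - 1, i), (x, i))) ` {..<l})"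
      by (rule card_mono[rotated]) simp
    also have "\<dots> \<le> l" using card_image_le[of "{..<l}"] by simp
    finally show ?thesis unfolding cut_edges_def .
  qed
  define P where "P x \<longleftrightarrow> (\<exists>H \<subseteq> {..<g}. g \<le> card H + l \<and> (\<forall>j\<in>H. fst (q (0,j)) < x))" for x
  define Q where "Q x \<longleftrightarrow> (\<exists>H \<subseteq> {..<g}. g \<le> card H + l \<and> (\<forall>j\<in>H. x \<le> fst (q (0,j))))" for x
  have PQ: "P x \<or> Q x" for x
  proof -
    have AB: "A x \<union> B x = grid_V r l" "A x \<inter> B x = {}" unfolding A_def B_def V_def by auto
    have c: "cut_edges grid_adj (A x) (B x) < g" using cut[of x] g3 by linarith
    obtain S G H where S: "S = A x \<or> S = B x" and H: "H \<subseteq> {..<g}"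
      "g \<le> card H + cut_edges grid_adj (A x) (B x)" "\<forall>j\<in>H. \<forall>i<g. \<mu> (i,j) \<subseteq> S"
      by (rule F1obt[OF AB mm c c])
    have Hc: "g \<le> card H + l" using H(2) cut[of x] by linarith
    have g0: "0 < g" using g3 by simp
    have qS: "q (0,j) \<in> S" if "j \<in> H" for j 
    proof -
      have "j < g" using H(1) that by auto
      then have "q (0,j) \<in> \<mu> (0,j)" "\<mu> (0,j) \<subseteq> S" using q H(3) that g0 by auto
      then show ?thesis by blast
    qed
    from S show ?thesis
    proof
      assume "S = A x" then have "P x" unfolding P_def using H(1) Hc qS by (auto simp: A_def)
      then show ?thesis ..
    next
      assume "S = B x" then have "Q x" unfolding Q_def using H(1) Hc qS by (auto simp: B_def)
      then show ?thesis ..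
    qed
  qed
  have nP0: "\<not> P 0" unfolding P_def using g3 by auto
  have nQl: "\<not> Q r"
  proof
    assume "Q r"
    then obtain H where H: "H \<subseteq> {..<g}" "g \<le> card H + l" "\<forall>j\<in>H. r \<le> fst (q (0,j))"
      unfolding Q_def by blast
    have "H \<noteq> {}" using H(2) g3 by auto
    then obtain j where j: "j \<in> H" by blast
    then have "j < g" using H(1) by auto
    then have "q (0,j) \<in> V" using q sub(1) by blast
    then show False using H(3) j unfolding V_def by (cases "q (0,j)") auto
  qed
  have "P r" using PQ nQl by blast
  from ivt_nat[of P, OF nP0 this] obtain x where x: "\<not> P x" "P (Suc x)" by blast
  then have "Q x" using PQ by blast
  then obtain H1 where H1: "H1 \<subseteq> {..<g}" "g \<le> card H1 + l" "\<forall>j\<in>H1. x \<le> fst (q (0,j))"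
    unfolding Q_def by blast
  obtain H2 where H2: "H2 \<subseteq> {..<g}" "g \<le> card H2 + l" "\<forall>j\<in>H2. fst (q (0,j)) < Suc x"
    using x unfolding P_def by blast
  have "(\<lambda>j. q (0,j)) ` (H1 \<inter> H2) \<subseteq> ({x} \<times> {..<l})"
  proof
    fix v assume "v \<in> (\<lambda>j. q (0,j)) ` (H1 \<inter> H2)"
    then obtain j where j: "j \<in> H1" "j \<in> H2" "v = q (0,j)" by blast
    then have "j < g" using H1 by auto
    then have "v \<in> V" using q sub(1) j by blast
    moreover have "fst v = x" using H1(3) H2(3) j by fastforce
    ultimately show "v \<in> ({x} \<times> {..<l})" unfolding V_def by (cases v) auto
  qed
  then have "card ((\<lambda>j. q (0,j)) ` (H1 \<inter> H2)) \<le> card (({x} \<times> {..<l}))"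
    by (rule card_mono[rotated]) simp
  moreover have "card ((\<lambda>j. q (0,j)) ` (H1 \<inter> H2)) = card (H1 \<inter> H2)"
    by (rule card_image) (rule inj_on_subset[OF qinj], use H1 in auto)
  moreover have "card (({x} \<times> {..<l})) = l" by (simp add: card_cartesian_product)
  ultimately have I: "card (H1 \<inter> H2) \<le> l" by simp
  have "card (H1 \<union> H2) \<le> card {..<g}" using H1(1) H2(1) by (intro card_mono) auto
  then have "card (H1 \<union> H2) \<le> g" by simp
  moreover have "card (H1 \<union> H2) + card (H1 \<inter> H2) = card H1 + card H2"
    using card_Un_Int[OF finite_subset[OF H1(1)] finite_subset[OF H2(1)]] by simp
  ultimately show False using H1(2) H2(2) I g3 by linarith
qed


lemma card_union_ge:
  fixes \<mu> :: "'b \<Rightarrow> 'a set"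
  assumes "finite I" "\<forall>v\<in>I. \<mu> v \<noteq> {}" "\<forall>u\<in>I. \<forall>v\<in>I. u \<noteq> v \<longrightarrow> \<mu> u \<inter> \<mu> v = {}"
    "finite (\<Union>v\<in>I. \<mu> v)"
  shows "card I \<le> card (\<Union>v\<in>I. \<mu> v)"
proof -
  define f where "f v = (SOME x. x \<in> \<mu> v)" for v
  have f: "f v \<in> \<mu> v" if "v \<in> I" for v
    using assms(2) that unfolding f_def by (metis ex_in_conv someI_ex)
  have "inj_on f I"
  proof (rule inj_onI)
    fix u v assume uv: "u \<in> I" "v \<in> I" "f u = f v"
    then have "f u \<in> \<mu> u \<inter> \<mu> v" using f by (metis IntI)
    then show "u = v" using assms(3) uv(1,2) by blast
  qed
  moreover have "f ` I \<subseteq> (\<Union>v\<in>I. \<mu> v)" using f by blast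
  ultimately show ?thesis using card_inj_on_le assms(4) by blast
qed

lemma big_pure:
  fixes \<mu> :: "nat \<times> nat \<Rightarrow> (nat \<times> nat) set"
  assumes mm: "minor_map (grid_V g g) grid_adj (grid_V r l) grid_adj \<mu>"
    and G: "G \<subseteq> {..<g}" "g \<le> card G + c" "\<forall>i\<in>G. \<forall>j<g. \<mu> (i,j) \<subseteq> S'"
    and Y: "S' \<subseteq> Y" "finite Y" "card Y \<le> c * c" and g8: "8 * c < g"
  shows False
proof -
  define I where "I = G \<times> {..<g}"
  have IZ: "I \<subseteq> grid_V g g" using G(1) unfolding I_def grid_V_def by auto
  have finI: "finite I" unfolding I_def using G(1) finite_subset by blast
  have ne: "\<forall>v\<in>I. \<mu> v \<noteq> {}" using IZ ic_ne[OF mm_conn[OF mm]] by blast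
  have dj: "\<forall>u\<in>I. \<forall>v\<in>I. u \<noteq> v \<longrightarrow> \<mu> u \<inter> \<mu> v = {}" using IZ mm_disj[OF mm] by blast
  have UY: "(\<Union>v\<in>I. \<mu> v) \<subseteq> Y" using G(3) Y(1) unfolding I_def by auto
  have "card I \<le> card (\<Union>v\<in>I. \<mu> v)"
    by (rule card_union_ge[OF finI ne dj finite_subset[OF UY Y(2)]])
  also have "\<dots> \<le> card Y" by (rule card_mono[OF Y(2) UY])
  finally have "card G * g \<le> c * c" using Y(3) unfolding I_def by (simp add: card_cartesian_product)
  moreover have "(c + 1) * (c + 1) \<le> card G * g" using G(2) g8 by (intro mult_le_mono) auto
  moreover have "c * c < (c + 1) * (c + 1)" by (simp add: algebra_simps)
  ultimately show False by linarith
qed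

lemma id_minor: "minor_map (grid_V r l) grid_adj (grid_V r l) grid_adj (\<lambda>v. {v})"
  unfolding minor_map_def induces_connected_def by auto

lemma card_first_row: "card (grid_first_row g) = g"
proof -
  have "grid_first_row g = (\<lambda>j. (0::nat, j)) ` {..<g}" unfolding grid_first_row_def by auto
  moreover have "card ((\<lambda>j. (0::nat, j)) ` {..<g}) = g" by (subst card_image) (auto intro: inj_onI)
  ultimately show ?thesis by simp
qed

lemma finite_first_row[simp]: "finite (grid_first_row g)"
proof -
  have "grid_first_row g = (\<lambda>j. (0::nat, j)) ` {..<g}" unfolding grid_first_row_def by auto
  then show ?thesis by simp
qed

lemma Wside:
  fixes \<mu> :: "nat \<times> nat \<Rightarrow> (nat \<times> nat) set"
  assumes q: "\<forall>v\<in>grid_first_row g. q v \<in> \<mu> v"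
    and H: "H \<subseteq> {..<g}" "g \<le> card H + c" "\<forall>j\<in>H. \<forall>i<g. \<mu> (i,j) \<subseteq> S"
  shows "card (q ` grid_first_row g - S) \<le> c"
proof -
  have "q ` grid_first_row g - S \<subseteq> (\<lambda>j. q (0,j)) ` ({..<g} - H)"
  proof
    fix x assume "x \<in> q ` grid_first_row g - S"
    then obtain j where j: "j < g" "x = q (0,j)" "x \<notin> S" unfolding grid_first_row_def by auto
    have "j \<notin> H"
    proof
      assume "j \<in> H"
      then have "\<mu> (0,j) \<subseteq> S" using H(3) j(1) by auto
      moreover have "q (0,j) \<in> \<mu> (0,j)" using q j(1) unfolding grid_first_row_def by auto
      ultimately show False using j by auto
    qed
    then show "x \<in> (\<lambda>j. q (0,j)) ` ({..<g} - H)" using j by auto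
  qed
  then have "card (q ` grid_first_row g - S) \<le> card ((\<lambda>j. q (0,j)) ` ({..<g} - H))"
    by (rule card_mono[rotated]) simp
  also have "\<dots> \<le> card ({..<g} - H)" by (rule card_image_le) simp
  also have "\<dots> = g - card H" using H(1) by (simp add: card_Diff_subset finite_subset)
  finally show ?thesis using H(2) by linarith
qed

theorem lemma10:
  fixes r l r1 r2 :: nat
    and \<mu>1 \<mu>2 :: "nat \<times> nat \<Rightarrow> (nat \<times> nat) set"
    and q1 q2 :: "nat \<times> nat \<Rightarrow> nat \<times> nat"
  assumes "r1 \<le> r2"
    and "minor_map (grid_V r1 r1) grid_adj (grid_V r l) grid_adj \<mu>1"
    and "minor_map (grid_V r2 r2) grid_adj (grid_V r l) grid_adj \<mu>2"
    and "(\<Union>v\<in>grid_V r1 r1. \<mu>1 v) \<inter> (\<Union>v\<in>grid_V r2 r2. \<mu>2 v) = {}"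
    and "\<forall>v\<in>grid_first_row r1. q1 v \<in> \<mu>1 v"
    and "\<forall>v\<in>grid_first_row r2. q2 v \<in> \<mu>2 v"
  shows "cut_linked (grid_V r l) grid_adj (1/384)
           (q1 ` grid_first_row r1 \<union> q2 ` grid_first_row r2)"
proof -
  note r12 = assms(1) and mm1 = assms(2) and mm2 = assms(3) and q1 = assms(5) and q2 = assms(6)
  define V where "V = grid_V r l"
  define W1 where "W1 = q1 ` grid_first_row r1"
  define W2 where "W2 = q2 ` grid_first_row r2"
  define X where "X = W1 \<union> W2"
  have q1': "\<forall>j<r1. q1 (0,j) \<in> \<mu>1 (0,j)" using q1 unfolding grid_first_row_def by auto
  have q2': "\<forall>j<r2. q2 (0,j) \<in> \<mu>2 (0,j)" using q2 unfolding grid_first_row_def by auto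
  have W1V: "W1 \<subseteq> V"
  proof
    fix x assume "x \<in> W1"
    then obtain j where j: "j < r1" "x = q1 (0,j)" unfolding W1_def grid_first_row_def by auto
    then have "(0,j) \<in> grid_V r1 r1" by simp
    from ic_sub[OF mm_conn[OF mm1 this]] q1' j show "x \<in> V" unfolding V_def by auto
  qed
  have W2V: "W2 \<subseteq> V"
  proof
    fix x assume "x \<in> W2"
    then obtain j where j: "j < r2" "x = q2 (0,j)" unfolding W2_def grid_first_row_def by auto
    then have "(0,j) \<in> grid_V r2 r2" by simp
    from ic_sub[OF mm_conn[OF mm2 this]] q2' j show "x \<in> V" unfolding V_def by auto
  qed
  have cW1: "card W1 \<le> r1" unfolding W1_def using card_image_le[of "grid_first_row r1" q1] card_first_row
    by simp
  have cW2: "card W2 \<le> r2" unfolding W2_def using card_image_le[of "grid_first_row r2" q2] card_first_row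
    by simp
  have finV: "finite V" unfolding V_def by simp
  have finW1: "finite W1" using W1V finV finite_subset by blast
  have finW2: "finite W2" using W2V finV finite_subset by blast
  have main: "min (card (A \<inter> X)) (card (B \<inter> X)) \<le> 9 * cut_edges grid_adj A B"
    if AB: "A \<union> B = V" "A \<inter> B = {}" for A B
  proof -
    define c where "c = cut_edges grid_adj A B"
    have AB': "A \<union> B = grid_V r l" "A \<inter> B = {}" using AB unfolding V_def by auto
    have finX: "finite X" unfolding X_def using finW1 finW2 by simp
    have kA: "min (card (A \<inter> X)) (card (B \<inter> X)) \<le> card (X \<inter> T)" if "T = A \<or> T = B" for T
      using that by (auto simp: Int_commute)
    show ?thesis
    proof (cases "r2 \<le> c")
      case True
      have "card (A \<inter> X) \<le> card X" using finX by (intro card_mono) auto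
      also have "\<dots> \<le> card W1 + card W2" unfolding X_def by (rule card_Un_le)
      finally show ?thesis using cW1 cW2 r12 True unfolding c_def by simp
    next
      case False
      then have c2: "c < r2" by simp
      have c2': "cut_edges grid_adj A B < r2" using c2 unfolding c_def .
      obtain S2 G2 H2 where S2: "S2 = A \<or> S2 = B" and G2a: "G2 \<subseteq> {..<r2}" and H2a: "H2 \<subseteq> {..<r2}"
        and G2b: "r2 \<le> card G2 + c" and H2b: "r2 \<le> card H2 + c"
        and G2c: "\<forall>i\<in>G2. \<forall>j<r2. \<mu>2 (i,j) \<subseteq> S2"
        and H2c: "\<forall>j\<in>H2. \<forall>i<r2. \<mu>2 (i,j) \<subseteq> S2"
        by (rule F1obt[OF AB' mm2 c2' c2', unfolded c_def[symmetric]])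
      note G2 = G2a G2b G2c and H2 = H2a H2b H2c
      have w2: "card (W2 - S2) \<le> c" unfolding W2_def by (rule Wside[OF q2 H2])
      define T2 where "T2 = (if S2 = A then B else A)"
      have T2: "T2 = A \<or> T2 = B" "T2 \<inter> S2 = {}" using S2 AB unfolding T2_def by auto
      have finT: "finite (W2 - S2)" using finW2 by simp
      show ?thesis
      proof (cases "r1 \<le> 8 * c")
        case True
        have "X \<inter> T2 \<subseteq> W1 \<union> (W2 - S2)" unfolding X_def using T2 by auto
        then have "card (X \<inter> T2) \<le> card (W1 \<union> (W2 - S2))" using finW1 finT by (intro card_mono) auto
        also have "\<dots> \<le> card W1 + card (W2 - S2)" by (rule card_Un_le)
        finally have "card (X \<inter> T2) \<le> 9 * c" using cW1 w2 True by linarith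
        then show ?thesis using kA[OF T2(1)] unfolding c_def by linarith
      next
        case False
        then have c1: "8 * c < r1" by simp
        then have c1': "c < r1" by simp
        have c1'': "cut_edges grid_adj A B < r1" using c1' unfolding c_def .
        obtain S1 G1 H1 where S1: "S1 = A \<or> S1 = B" and G1a: "G1 \<subseteq> {..<r1}" and H1a: "H1 \<subseteq> {..<r1}"
          and G1b: "r1 \<le> card G1 + c" and H1b: "r1 \<le> card H1 + c"
          and G1c: "\<forall>i\<in>G1. \<forall>j<r1. \<mu>1 (i,j) \<subseteq> S1"
          and H1c: "\<forall>j\<in>H1. \<forall>i<r1. \<mu>1 (i,j) \<subseteq> S1"
          by (rule F1obt[OF AB' mm1 c1'' c1'', unfolded c_def[symmetric]])
        note G1 = G1a G1b G1c and H1 = H1a H1b H1c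
        have w1: "card (W1 - S1) \<le> c" unfolding W1_def by (rule Wside[OF q1 H1])
        show ?thesis
        proof (cases "S1 = S2")
          case True
          have finT1: "finite (W1 - S1)" using finW1 by simp
          have "X \<inter> T2 \<subseteq> (W1 - S1) \<union> (W2 - S2)" unfolding X_def using T2 True by auto
          then have "card (X \<inter> T2) \<le> card ((W1 - S1) \<union> (W2 - S2))" using finT1 finT by (intro card_mono) auto
          also have "\<dots> \<le> card (W1 - S1) + card (W2 - S2)" by (rule card_Un_le)
          finally have "card (X \<inter> T2) \<le> 9 * c" using w1 w2 by linarith
          then show ?thesis using kA[OF T2(1)] unfolding c_def by linarith
        next
          case False
          have sr: "r1 \<le> 3 * r" by (rule strip_col[OF mm1 q1'])
          have sl: "r1 \<le> 3 * l" by (rule strip_row[OF mm1 q1'])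
          have cr: "cut_edges grid_adj A B < r" "cut_edges grid_adj A B < l"
            using sr sl c1 unfolding c_def by linarith+
          obtain S G H where S: "S = A \<or> S = B" and Ga: "G \<subseteq> {..<r}" and Ha: "H \<subseteq> {..<l}"
            and Gb: "r \<le> card G + c" and Hb: "l \<le> card H + c"
            and Gc: "\<forall>i\<in>G. \<forall>j<l. {(i,j)} \<subseteq> S"
            and Hc: "\<forall>j\<in>H. \<forall>i<r. {(i,j)} \<subseteq> S"
            by (rule F1obt[OF AB' id_minor cr, unfolded c_def[symmetric]])
          note G = Ga Gb Gc and H = Ha Hb Hc
          define Y where "Y = V - S"
          have YS: "Y \<subseteq> ({..<r} - G) \<times> ({..<l} - H)"
          proof
            fix v assume v: "v \<in> Y"
            obtain a b where ab: "v = (a,b)" by (cases v)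
            have "a < r" "b < l" "(a,b) \<notin> S" using v ab unfolding Y_def V_def by auto
            then show "v \<in> ({..<r} - G) \<times> ({..<l} - H)" using G(3) H(3) ab by auto
          qed
          have finY: "finite Y" unfolding Y_def using finV by simp
          have "card Y \<le> card (({..<r} - G) \<times> ({..<l} - H))" by (rule card_mono[OF _ YS]) simp
          also have "\<dots> = (r - card G) * (l - card H)"
            using G(1) H(1) by (simp add: card_cartesian_product card_Diff_subset finite_subset)
          also have "\<dots> \<le> c * c" using G(2) H(2) by (intro mult_le_mono) auto
          finally have cY: "card Y \<le> c * c" .
          have A_V: "A \<subseteq> V" "B \<subseteq> V" using AB by auto
          consider "S1 \<noteq> S" | "S2 \<noteq> S" using False S1 S2 S by blast
          then show ?thesis
          proof cases
            case 1
            then have "S1 \<subseteq> Y" using S1 S AB unfolding Y_def by auto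
            from big_pure[OF mm1 G1 this finY cY c1] show ?thesis ..
          next
            case 2
            then have "S2 \<subseteq> Y" using S2 S AB unfolding Y_def by auto
            moreover have "8 * c < r2" using c1 r12 by linarith
            ultimately show ?thesis using big_pure[OF mm2 G2 _ finY cY] by blast
          qed
        qed
      qed
    qed
  qed
  show ?thesis unfolding cut_linked_def
  proof (intro conjI allI impI)
    show "q1 ` grid_first_row r1 \<union> q2 ` grid_first_row r2 \<subseteq> grid_V r l"
      using W1V W2V unfolding W1_def W2_def V_def by auto
  next
    fix A B assume "A \<union> B = grid_V r l \<and> A \<inter> B = {}"
    then have "min (card (A \<inter> X)) (card (B \<inter> X)) \<le> 9 * cut_edges grid_adj A B"
      using main unfolding V_def by blast
    then have "real (min (card (A \<inter> X)) (card (B \<inter> X))) \<le> 9 * real (cut_edges grid_adj A B)"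
      by linarith
    then show "1 / 384 * real (min (card (A \<inter> (q1 ` grid_first_row r1 \<union> q2 ` grid_first_row r2)))
        (card (B \<inter> (q1 ` grid_first_row r1 \<union> q2 ` grid_first_row r2))))
       \<le> real (cut_edges grid_adj A B)"
      unfolding X_def W1_def W2_def by linarith
  qed
qed

end
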